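(* Let $p\in\{1,\infty\}$ and let $\mathcal J \subseteq 2^{[m]}$ be a nonempty family of forbidden supports for $\mathcal P_{0/p}$. Define $J^{none} := [m]\setminus \bigcup_{J\in\mathcal J} J$ and $J^{some} := [m]\setminus\big(J^{none}\cup \bigcap_{J\in\mathcal J} J\big)$. Then the forbidden support family inequality $$\sum_{j\in J^{none}} 2\, b_j + \sum_{j \in J^{some}} b_j \;\ge\; 2$$ is valid for $\mathsf{MIP}_{0/p}$: every feasible solution $(x,w,b)$ of $\mathsf{MIP}_{0/p}$ satisfies it.
   Context: Data: a matrix $H=(h_{ij}) \in \mathbb{R}^{n\times m}$, a vector $y \in \mathbb{R}^n$, thresholds $\alpha_1 \ge 0$ and $\alpha_\infty \ge 0$, and a constant $M>0$. For a positive integer $t$, write $[t]=\{1,\dots,t\}$. For $J\subseteq[m]$, $H^J$ denotes the submatrix of $H$ consisting of the columns indexed by $J$, and $x^J$ the subvector of $x$ indexed by $J$. A set $J \subseteq [m]$ is a forbidden support for $\mathcal P_{0/p}$ if $\min_{x^J} \|y - H^J x^J\|_p > \alpha_p$, i.e. there is no $x \in \mathbb{R}^m$ with $x_j = 0$ for all $j \notin J$ and $\|y - Hx\|_p \le \alpha_p$. $\mathsf{MIP}_{0/1}$ is the set of $(x,w,b) \in \mathbb{R}^m \times \mathbb{R}^n \times \{0,1\}^m$ satisfying $-Mb_j \le x_j \le M b_j$ for all $j\in[m]$, $-w_i \le y_i - \sum_{j\in[m]} h_{ij}x_j \le w_i$ for all $i \in [n]$, and $\sum_{i\in[n]} w_i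 \le \alpha_1$. $\mathsf{MIP}_{0/\infty}$ is the set of $(x,w,b) \in \mathbb{R}^m \times \mathbb{R} \times \{0,1\}^m$ satisfying $-Mb_j \le x_j \le M b_j$ for all $j\in[m]$, $-w \le y_i - \sum_{j\in[m]} h_{ij}x_j \le w$ for all $i \in [n]$, and $w \le \alpha_\infty$. An inequality in the variables $b$ is valid for $\mathsf{MIP}_{0/p}$ if it is satisfied by every feasible point of $\mathsf{MIP}_{0/p}$. *)

theory Defs
  imports Complex_Main
begin

text \<open>Data: H as a function of row index i in {1..n} and column index j in {1..m};
 vectors are functions nat => real, only the entries indexed by [n] resp. [m] matter.\<close>

datatype pnorm = P1 | Pinf

definition resid :: "(nat \<Rightarrow> nat \<Rightarrow> real) \<Rightarrow> (nat \<Rightarrow> real) \<Rightarrow> nat \<Rightarrow> (nat \<Rightarrow> real) \<Rightarrow> nat \<Rightarrow> real" where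
  "resid H y m x i = y i - (\<Sum>j\<in>{1..m}. H i j * x j)"

definition resid_norm :: "pnorm \<Rightarrow> (nat \<Rightarrow> nat \<Rightarrow> real) \<Rightarrow> (nat \<Rightarrow> real) \<Rightarrow> nat \<Rightarrow> nat \<Rightarrow> (nat \<Rightarrow> real) \<Rightarrow> real" where
  "resid_norm p H y n m x = (case p of
      P1 \<Rightarrow> (\<Sum>i\<in>{1..n}. \<bar>resid H y m x i\<bar>)
    | Pinf \<Rightarrow> Max (insert 0 ((\<lambda>i. \<bar>resid H y m x i\<bar>) ` {1..n})))"

definition alpha_p :: "pnorm \<Rightarrow> real \<Rightarrow> real \<Rightarrow> real" where
  "alpha_p p a1 ainf = (case p of P1 \<Rightarrow> a1 | Pinf \<Rightarrow> ainf)"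

definition forbidden_support :: "pnorm \<Rightarrow> (nat \<Rightarrow> nat \<Rightarrow> real) \<Rightarrow> (nat \<Rightarrow> real) \<Rightarrow> nat \<Rightarrow> nat \<Rightarrow> real \<Rightarrow> real \<Rightarrow> nat set \<Rightarrow> bool" where
  "forbidden_support p H y n m a1 ainf J \<longleftrightarrow>
     J \<subseteq> {1..m} \<and>
     \<not> (\<exists>x. (\<forall>j\<in>{1..m} - J. x j = 0) \<and> resid_norm p H y n m x \<le> alpha_p p a1 ainf)"

definition in_MIP01 :: "(nat \<Rightarrow> nat \<Rightarrow> real) \<Rightarrow> (nat \<Rightarrow> real) \<Rightarrow> nat \<Rightarrow> nat \<Rightarrow> real \<Rightarrow> real
    \<Rightarrow> (nat \<Rightarrow> real) \<Rightarrow> (nat \<Rightarrow> real) \<Rightarrow> (nat \<Rightarrow> real) \<Rightarrow> bool" where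
  "in_MIP01 H y n m a1 M x w b \<longleftrightarrow>
     (\<forall>j\<in>{1..m}. b j \<in> {0,1} \<and> - M * b j \<le> x j \<and> x j \<le> M * b j) \<and>
     (\<forall>i\<in>{1..n}. - w i \<le> resid H y m x i \<and> resid H y m x i \<le> w i) \<and>
     (\<Sum>i\<in>{1..n}. w i) \<le> a1"

definition in_MIP0inf :: "(nat \<Rightarrow> nat \<Rightarrow> real) \<Rightarrow> (nat \<Rightarrow> real) \<Rightarrow> nat \<Rightarrow> nat \<Rightarrow> real \<Rightarrow> real
    \<Rightarrow> (nat \<Rightarrow> real) \<Rightarrow> real \<Rightarrow> (nat \<Rightarrow> real) \<Rightarrow> bool" where
  "in_MIP0inf H y n m ainf M x w b \<longleftrightarrow>
     (\<forall>j\<in>{1..m}. b j \<in> {0,1} \<and> - M * b j \<le> x j \<and> x j \<le> M * b j) \<and>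
     (\<forall>i\<in>{1..n}. - w \<le> resid H y m x i \<and> resid H y m x i \<le> w) \<and>
     w \<le> ainf"

definition valid_MIP :: "pnorm \<Rightarrow> (nat \<Rightarrow> nat \<Rightarrow> real) \<Rightarrow> (nat \<Rightarrow> real) \<Rightarrow> nat \<Rightarrow> nat \<Rightarrow> real \<Rightarrow> real \<Rightarrow> real
    \<Rightarrow> ((nat \<Rightarrow> real) \<Rightarrow> bool) \<Rightarrow> bool" where
  "valid_MIP p H y n m a1 ainf M F \<longleftrightarrow> (case p of
      P1 \<Rightarrow> (\<forall>x w b. in_MIP01 H y n m a1 M x w b \<longrightarrow> F b)
    | Pinf \<Rightarrow> (\<forall>x w b. in_MIP0inf H y n m ainf M x w b \<longrightarrow> F b))"

end

theory Submission
  imports Defs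
begin

lemma key:
  fixes p :: pnorm and H :: "nat \<Rightarrow> nat \<Rightarrow> real" and y :: "nat \<Rightarrow> real"
    and n m :: nat and a1 ainf M :: real and \<J> :: "nat set set"
  assumes "\<J> \<noteq> {}"
    and F: "\<forall>J\<in>\<J>. forbidden_support p H y n m a1 ainf J"
    and B: "\<forall>j\<in>{1..m}. b j \<in> {0,1} \<and> - M * b j \<le> x j \<and> x j \<le> M * b j"
    and R: "resid_norm p H y n m x \<le> alpha_p p a1 ainf"
  shows "(\<Sum>j\<in>{1..m} - \<Union>\<J>. 2 * b j) + (\<Sum>j\<in>{1..m} - (({1..m} - \<Union>\<J>) \<union> \<Inter>\<J>). b j) \<ge> 2"
proof -
  define S where "S = {j\<in>{1..m}. b j = 1}"
  have ex: "\<exists>j\<in>S. j \<notin> J" if "J \<in> \<J>" for J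
  proof (rule ccontr)
    assume "\<not> ?thesis"
    hence "\<forall>j\<in>{1..m} - J. x j = 0"
    proof (intro ballI)
      fix j assume a: "\<not> (\<exists>j\<in>S. j \<notin> J)" "j \<in> {1..m} - J"
      hence "b j = 0" using B unfolding S_def by auto
      thus "x j = 0" using B a by force
    qed
    thus False using F that R unfolding forbidden_support_def by blast
  qed
  define Jn where "Jn = {1..m} - \<Union>\<J>"
  define Js where "Js = {1..m} - (Jn \<union> \<Inter>\<J>)"
  have nn: "b j \<ge> 0" if "j \<in> {1..m}" for j using B that by force
  have f1: "finite Jn" "finite Js" unfolding Jn_def Js_def by auto
  have s1: "(\<Sum>j\<in>Jn. 2 * b j) \<ge> 0" by (rule sum_nonneg) (use nn Jn_def in auto)
  have s2: "(\<Sum>j\<in>Js. b j) \<ge> 0" by (rule sum_nonneg) (use nn Js_def in auto)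
  have "(\<Sum>j\<in>Jn. 2 * b j) + (\<Sum>j\<in>Js. b j) \<ge> 2"
  proof (cases "\<exists>j\<in>S. j \<in> Jn")
    case True
    then obtain j where j: "j \<in> S" "j \<in> Jn" by blast
    have "2 * b j \<le> (\<Sum>j\<in>Jn. 2 * b j)"
      by (rule member_le_sum) (use j nn Jn_def in auto)
    moreover have "b j = 1" using j S_def by auto
    ultimately show ?thesis using s2 by linarith
  next
    case False
    obtain J0 where J0: "J0 \<in> \<J>" using assms(1) by blast
    obtain j1 where j1: "j1 \<in> S" "j1 \<notin> J0" using ex J0 by blast
    have "j1 \<in> \<Union>\<J>" using False j1 S_def Jn_def by auto
    then obtain J1 where J1: "J1 \<in> \<J>" "j1 \<in> J1" by blast
    obtain j2 where j2: "j2 \<in> S" "j2 \<notin> J1" using ex J1 by blast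
    have "j2 \<in> \<Union>\<J>" using False j2 S_def Jn_def by auto
    have j1s: "j1 \<in> Js" using j1 J0 \<open>j1 \<in> \<Union>\<J>\<close> S_def Js_def Jn_def by auto
    have j2s: "j2 \<in> Js" using j2 J1 \<open>j2 \<in> \<Union>\<J>\<close> S_def Js_def Jn_def by auto
    have ne: "j1 \<noteq> j2" using J1 j2 by auto
    have "(\<Sum>j\<in>{j1,j2}. b j) \<le> (\<Sum>j\<in>Js. b j)"
      by (rule sum_mono2) (use f1 j1s j2s nn Js_def in auto)
    moreover have "(\<Sum>j\<in>{j1,j2}. b j) = 2" using ne j1 j2 S_def by auto
    ultimately show ?thesis using s1 by linarith
  qed
  thus ?thesis unfolding Jn_def Js_def .
qed

theorem proposition3:
  fixes p :: pnorm and H :: "nat \<Rightarrow> nat \<Rightarrow> real" and y :: "nat \<Rightarrow> real"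
    and n m :: nat and a1 ainf M :: real and \<J> :: "nat set set"
  assumes "a1 \<ge> 0" and "ainf \<ge> 0" and "M > 0"
    and "\<J> \<noteq> {}"
    and "\<forall>J\<in>\<J>. forbidden_support p H y n m a1 ainf J"
  shows "let Jnone = {1..m} - \<Union>\<J>;
             Jsome = {1..m} - (Jnone \<union> \<Inter>\<J>)
         in valid_MIP p H y n m a1 ainf M
              (\<lambda>b. (\<Sum>j\<in>Jnone. 2 * b j) + (\<Sum>j\<in>Jsome. b j) \<ge> 2)"
proof (cases p)
  case P1
  show ?thesis unfolding Let_def valid_MIP_def P1
  proof (simp only: pnorm.case, intro allI impI)
    fix x w b assume A: "in_MIP01 H y n m a1 M x w b"
    have "resid_norm P1 H y n m x \<le> alpha_p P1 a1 ainf"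
    proof -
      have "(\<Sum>i\<in>{1..n}. \<bar>resid H y m x i\<bar>) \<le> (\<Sum>i\<in>{1..n}. w i)"
        by (rule sum_mono) (use A in \<open>force simp: in_MIP01_def abs_le_iff\<close>)
      thus ?thesis using A unfolding in_MIP01_def resid_norm_def alpha_p_def by auto
    qed
    thus "(\<Sum>j\<in>{1..m} - \<Union>\<J>. 2 * b j) + (\<Sum>j\<in>{1..m} - (({1..m} - \<Union>\<J>) \<union> \<Inter>\<J>). b j) \<ge> 2"
      using key[of \<J> P1 H y n m a1 ainf b M x] assms A P1 unfolding in_MIP01_def by blast
  qed
next
  case Pinf
  show ?thesis unfolding Let_def valid_MIP_def Pinf
  proof (simp only: pnorm.case, intro allI impI)
    fix x w b assume A: "in_MIP0inf H y n m ainf M x w b"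
    have "resid_norm Pinf H y n m x \<le> alpha_p Pinf a1 ainf"
    proof -
      have "Max (insert 0 ((\<lambda>i. \<bar>resid H y m x i\<bar>) ` {1..n})) \<le> ainf"
      proof (subst Max_le_iff, simp, simp, intro ballI)
        fix a assume "a \<in> insert 0 ((\<lambda>i. \<bar>resid H y m x i\<bar>) ` {1..n})"
        thus "a \<le> ainf" using A assms(2) unfolding in_MIP0inf_def by fastforce
      qed
      thus ?thesis unfolding resid_norm_def alpha_p_def by simp
    qed
    thus "(\<Sum>j\<in>{1..m} - \<Union>\<J>. 2 * b j) + (\<Sum>j\<in>{1..m} - (({1..m} - \<Union>\<J>) \<union> \<Inter>\<J>). b j) \<ge> 2"
      using key[of \<J> Pinf H y n m a1 ainf b M x] assms A Pinf unfolding in_MIP0inf_def by blast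
  qed
qed

end
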